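(* Let $\beta>0$, let $\tilde r_h\in\mathbb{R}^{\mathcal{S}\times\mathcal{A}}$ for $h\in[H]$, and let $d^t=(d^t_1,\dots,d^t_H)$ be a feasible occupancy measure with policy $\pi^t_h=\pi_{d^t_h}$ and $\mu^t_h:=d^t_h$. Let $$d^{t+1}=\arg\max_{d\in\Delta^H}\ \sum_{h=1}^H\Big(\langle d_h,\tilde r_h\rangle-\tfrac1\beta D(d_h,d^t_h)-\tfrac1\beta \mathcal{H}(d_h,d^t_h)\Big)\quad\text{s.t.}\quad E^Td_1=\nu_1,\ \ E^Td_h=F^Td_{h-1}\ \ \forall h\in\{2,\dots,H\}.$$ Then the policy $\pi^{t+1}_h=\pi_{d^{t+1}_h}$ with occupancy measure $d^{t+1}_h$ satisfies $$\pi^{t+1}_h(a|s)\ \propto\ \pi^t_h(a|s)\exp\big(\beta Q^t_h(s,a)\big),$$ where $Q^t=(Q^t_1,\dots,Q^t_H)$ is a minimizer over $Q=(Q_1,\dots,Q_H)$ of the loss $$\frac1\beta\sum_{h=1}^H\log\sum_{s,a}\mu^t_h(s,a)\exp\Big(\beta\big(\tilde r_h+FV_{h+1}-Q_h\big)(s,a)\Big)+\langle\nu_1,V_1\rangle,$$ in which $V_{H+1}\equiv0$ and $V_h(s)=\frac1\beta\log\sum_a\pi^t_h(a|s)\exp(\beta Q_h(s,a))$; and $V^t_h(s)=\frac1\beta\log\sum_a\pi^t_h(a|s)\exp(\beta Q^t_h(s,a))$.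
   Context: Finite state space $\mathcal{S}$, finite action space $\mathcal{A}$, horizon $H$, transition kernel $f$, initial distribution $\nu_1$. $\Delta^H$ is the $H$-fold product of the simplex $\Delta_{\mathcal{S}\times\mathcal{A}}$. The matrix $E$ acts by $(Ez)(s,a)=z(s)$ so $(E^Td)(s)=\sum_ad(s,a)$; the matrix $F$ acts by $(Fz)(s,a)=\sum_{s'}f(s'|s,a)z(s')$ so $(F^Td)(s')=\sum_{s,a}f(s'|s,a)d(s,a)$. For $d\in\Delta_{\mathcal{S}\times\mathcal{A}}$, $\pi_d(a|s)=d(s,a)/\sum_{a'}d(s,a')$. Relative entropy: $D(d,d')=\sum_{s,a}d(s,a)\log\frac{d(s,a)}{d'(s,a)}$. Conditional relative entropy: $\mathcal{H}(d,d')=\sum_{s,a}d(s,a)\log\frac{\pi_d(a|s)}{\pi_{d'}(a|s)}$. *)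

theory Defs
  imports Complex_Main
begin

text \<open>Finite MDP: states 's, actions 'a (finite types), horizon H, kernel f s a s' = f(s'|s,a),
  initial distribution nu. Stage-indexed objects are functions of type nat => ..., used on 1..H.\<close>

definition simplex :: "('s::finite \<times> 'a::finite \<Rightarrow> real) \<Rightarrow> bool" where
  "simplex d \<longleftrightarrow> (\<forall>x. 0 \<le> d x) \<and> (\<Sum>x\<in>UNIV. d x) = 1"

definition ET :: "('s::finite \<times> 'a::finite \<Rightarrow> real) \<Rightarrow> 's \<Rightarrow> real" where
  "ET d s = (\<Sum>a\<in>UNIV. d (s, a))"

definition FT :: "('s::finite \<Rightarrow> 'a::finite \<Rightarrow> 's \<Rightarrow> real) \<Rightarrow> ('s \<times> 'a \<Rightarrow> real) \<Rightarrow> 's \<Rightarrow> real" where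
  "FT f d s' = (\<Sum>x\<in>UNIV. f (fst x) (snd x) s' * d x)"

definition Fop :: "('s::finite \<Rightarrow> 'a::finite \<Rightarrow> 's \<Rightarrow> real) \<Rightarrow> ('s \<Rightarrow> real) \<Rightarrow> 's \<times> 'a \<Rightarrow> real" where
  "Fop f z x = (\<Sum>s'\<in>UNIV. f (fst x) (snd x) s' * z s')"

definition pol :: "('s \<times> 'a::finite \<Rightarrow> real) \<Rightarrow> 'a \<Rightarrow> 's \<Rightarrow> real" where
  "pol d a s = d (s, a) / (\<Sum>a'\<in>UNIV. d (s, a'))"

definition inner_sa :: "('s::finite \<times> 'a::finite \<Rightarrow> real) \<Rightarrow> ('s \<times> 'a \<Rightarrow> real) \<Rightarrow> real" where
  "inner_sa d r = (\<Sum>x\<in>UNIV. d x * r x)"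

definition relent :: "('s::finite \<times> 'a::finite \<Rightarrow> real) \<Rightarrow> ('s \<times> 'a \<Rightarrow> real) \<Rightarrow> real" where
  "relent d d' = (\<Sum>x\<in>UNIV. d x * ln (d x / d' x))"

definition condrelent :: "('s::finite \<times> 'a::finite \<Rightarrow> real) \<Rightarrow> ('s \<times> 'a \<Rightarrow> real) \<Rightarrow> real" where
  "condrelent d d' = (\<Sum>x\<in>UNIV. d x * ln (pol d (snd x) (fst x) / pol d' (snd x) (fst x)))"

definition feasible :: "('s::finite \<Rightarrow> 'a::finite \<Rightarrow> 's \<Rightarrow> real) \<Rightarrow> ('s \<Rightarrow> real) \<Rightarrow> nat
    \<Rightarrow> (nat \<Rightarrow> 's \<times> 'a \<Rightarrow> real) \<Rightarrow> bool" where
  "feasible f \<nu> H d \<longleftrightarrow>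
     (\<forall>h\<in>{1..H}. simplex (d h)) \<and>
     (\<forall>h\<in>{1..H}. ET (d h) = (if h = 1 then \<nu> else FT f (d (h - 1))))"

definition objective :: "real \<Rightarrow> nat \<Rightarrow> (nat \<Rightarrow> 's::finite \<times> 'a::finite \<Rightarrow> real)
    \<Rightarrow> (nat \<Rightarrow> 's \<times> 'a \<Rightarrow> real) \<Rightarrow> (nat \<Rightarrow> 's \<times> 'a \<Rightarrow> real) \<Rightarrow> real" where
  "objective \<beta> H r dt d =
     (\<Sum>h=1..H. inner_sa (d h) (r h) - relent (d h) (dt h) / \<beta> - condrelent (d h) (dt h) / \<beta>)"

definition Vfun :: "real \<Rightarrow> nat \<Rightarrow> (nat \<Rightarrow> 's \<times> 'a::finite \<Rightarrow> real)
    \<Rightarrow> (nat \<Rightarrow> 's \<times> 'a \<Rightarrow> real) \<Rightarrow> nat \<Rightarrow> 's \<Rightarrow> real" where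
  "Vfun \<beta> H dt Q h s =
     (if h \<le> H then ln (\<Sum>a\<in>UNIV. pol (dt h) a s * exp (\<beta> * Q h (s, a))) / \<beta> else 0)"

definition loss :: "real \<Rightarrow> nat \<Rightarrow> ('s::finite \<Rightarrow> 'a::finite \<Rightarrow> 's \<Rightarrow> real) \<Rightarrow> ('s \<Rightarrow> real)
    \<Rightarrow> (nat \<Rightarrow> 's \<times> 'a \<Rightarrow> real) \<Rightarrow> (nat \<Rightarrow> 's \<times> 'a \<Rightarrow> real)
    \<Rightarrow> (nat \<Rightarrow> 's \<times> 'a \<Rightarrow> real) \<Rightarrow> real" where
  "loss \<beta> H f \<nu> r dt Q =
     (\<Sum>h=1..H. ln (\<Sum>x\<in>UNIV. dt h x *
        exp (\<beta> * (r h x + Fop f (Vfun \<beta> H dt Q (h + 1)) x - Q h x)))) / \<beta>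
     + (\<Sum>s\<in>UNIV. \<nu> s * Vfun \<beta> H dt Q 1 s)"

end

theory Submission
  imports Defs
begin

lemma sum_pair: "(\<Sum>x\<in>(UNIV::('s::finite \<times> 'a::finite) set). g x) = (\<Sum>s\<in>UNIV. \<Sum>a\<in>UNIV. g (s,a))"
proof -
  have "(\<Sum>s\<in>UNIV. \<Sum>a\<in>UNIV. g (s,a)) = (\<Sum>(s,a)\<in>(UNIV::'s set)\<times>(UNIV::'a set). g (s,a))"
    by (rule sum.cartesian_product)
  then show ?thesis by simp
qed

definition xlnx :: "real \<Rightarrow> real" where "xlnx u = u * ln u"

lemma xlnx_tangent:
  fixes a u :: real assumes a: "0 < a" and u: "0 \<le> u"
  shows "xlnx a + (ln a + 1) * (u - a) \<le> xlnx u"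
proof (cases "u = 0")
  case True then show ?thesis using a by (simp add: xlnx_def algebra_simps)
next
  case False
  then have up: "0 < u" using u by simp
  have "ln (a/u) \<le> a/u - 1" using a up by (intro ln_le_minus_one) simp
  then have "ln a - ln u \<le> a/u - 1" using a up by (simp add: ln_divide_pos)
  then have "u * (ln a - ln u) \<le> u * (a/u - 1)" using up by (intro mult_left_mono) auto
  then have "u * ln a - u * ln u \<le> a - u" using up by (simp add: algebra_simps)
  then show ?thesis by (simp add: xlnx_def algebra_simps)
qed

lemma xlnx_upper:
  fixes a u :: real assumes a: "0 < a" and up: "0 < u"
  shows "xlnx u \<le> xlnx a + (ln a + 1) * (u - a) + (u - a)^2 / a"
proof -
  have "ln (u/a) \<le> u/a - 1" using a up by (intro ln_le_minus_one) simp
  then have "ln u - ln a \<le> u/a - 1" using a up by (simp add: ln_divide_pos)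
  then have "u * (ln u - ln a) \<le> u * (u/a - 1)" using up by (intro mult_left_mono) auto
  also have "u * (u/a - 1) = (u - a)^2 / a + (u - a)" using a by (simp add: field_simps power2_eq_square)
  finally show ?thesis by (simp add: xlnx_def algebra_simps)
qed

lemma gibbs_term:
  fixes d q :: real assumes d: "0 \<le> d" and q: "0 \<le> q" and dq: "0 < d \<Longrightarrow> 0 < q"
  shows "d - q \<le> d * ln (d / q)"
proof (cases "d = 0")
  case True then show ?thesis using q by simp
next
  case False
  then have dp: "0 < d" using d by simp
  then have qp: "0 < q" using dq by simp
  have "ln (q/d) \<le> q/d - 1" using dp qp by (intro ln_le_minus_one) simp
  then have "ln q - ln d \<le> q/d - 1" using dp qp by (simp add: ln_divide_pos)
  then have "d * (ln q - ln d) \<le> d * (q/d - 1)" using dp by (intro mult_left_mono) auto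
  also have "d * (q/d - 1) = q - d" using dp by (simp add: field_simps)
  finally have "d * (ln q - ln d) \<le> q - d" .
  then show ?thesis using dp qp by (simp add: ln_divide_pos algebra_simps)
qed

lemma gibbs_term_eq:
  fixes d q :: real assumes dp: "0 < d" and qp: "0 < q" and eq: "d * ln (d / q) = d - q"
  shows "q = d"
proof -
  have "d * (ln d - ln q) = d - q" using eq dp qp by (simp add: ln_divide_pos)
  then have "ln d - ln q = 1 - q/d" using dp by (simp add: field_simps)
  then have "ln (q/d) = q/d - 1" using dp qp by (simp add: ln_divide_pos)
  then have "q/d = 1" using dp qp by (intro ln_eq_minus_one) auto
  then show ?thesis using dp by simp
qed

lemma ET_lin: "ET (\<lambda>x. a * u x + b * v x) s = a * ET u s + b * ET v s"
  by (simp add: ET_def sum.distrib sum_distrib_left)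

lemma FT_lin: "FT f (\<lambda>x. a * u x + b * v x) s = a * FT f u s + b * FT f v s"
  by (simp add: FT_def sum.distrib sum_distrib_left algebra_simps)

lemma sum_ET: "(\<Sum>s\<in>UNIV. ET z s) = (\<Sum>x\<in>UNIV. z x)"
  by (simp add: ET_def sum_pair)

lemma inner_fst: "(\<Sum>x\<in>UNIV. z x * V (fst x)) = (\<Sum>s\<in>UNIV. ET z s * V s)"
  by (simp add: ET_def sum_pair sum_distrib_right)

lemma inner_Fop: "(\<Sum>x\<in>UNIV. z x * Fop f V x) = (\<Sum>s'\<in>UNIV. FT f z s' * V s')"
proof -
  have "(\<Sum>x\<in>UNIV. z x * Fop f V x) = (\<Sum>x\<in>UNIV. \<Sum>s'\<in>UNIV. z x * (f (fst x) (snd x) s' * V s'))"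
    by (simp add: Fop_def sum_distrib_left)
  also have "\<dots> = (\<Sum>s'\<in>UNIV. \<Sum>x\<in>UNIV. z x * (f (fst x) (snd x) s' * V s'))"
    by (rule sum.swap)
  also have "\<dots> = (\<Sum>s'\<in>UNIV. FT f z s' * V s')"
    by (simp add: FT_def sum_distrib_right sum_distrib_left algebra_simps)
  finally show ?thesis .
qed

lemma le_ET: assumes "\<forall>x. 0 \<le> z x" shows "z (s, a) \<le> ET z s"
  unfolding ET_def using assms by (intro member_le_sum) auto

lemma ET_nonneg: assumes "\<forall>x. 0 \<le> z x" shows "0 \<le> ET z s"
  unfolding ET_def using assms by (intro sum_nonneg) auto

locale mdp =
  fixes f :: "'s::finite \<Rightarrow> 'a::finite \<Rightarrow> 's \<Rightarrow> real"
    and \<nu> :: "'s \<Rightarrow> real" and H :: nat and \<beta> :: real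
    and r dt :: "nat \<Rightarrow> 's \<times> 'a \<Rightarrow> real"
  assumes f_nonneg: "\<forall>s a s'. 0 \<le> f s a s'"
    and f_sum: "\<forall>s a. (\<Sum>s'\<in>UNIV. f s a s') = 1"
    and nu_nonneg: "\<forall>s. 0 \<le> \<nu> s" and nu_sum: "(\<Sum>s\<in>UNIV. \<nu> s) = 1"
    and beta_pos: "\<beta> > 0"
    and dt_feas: "feasible f \<nu> H dt"
    and dt_pos: "\<forall>h\<in>{1..H}. \<forall>x. 0 < dt h x"
begin

definition flow :: "(nat \<Rightarrow> 's \<times> 'a \<Rightarrow> real) \<Rightarrow> ('s \<Rightarrow> real) \<Rightarrow> bool" where
  "flow z c \<longleftrightarrow> (\<forall>h\<in>{1..H}. ET (z h) = (if h = 1 then c else FT f (z (h - 1))))"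

lemma sum_FT: "(\<Sum>s'\<in>UNIV. FT f z s') = (\<Sum>x\<in>UNIV. z x)"
proof -
  have "(\<Sum>s'\<in>UNIV. FT f z s') = (\<Sum>x\<in>UNIV. \<Sum>s'\<in>UNIV. f (fst x) (snd x) s' * z x)"
    unfolding FT_def by (rule sum.swap)
  also have "\<dots> = (\<Sum>x\<in>UNIV. z x)"
    using f_sum by (simp add: sum_distrib_right[symmetric])
  finally show ?thesis .
qed

lemma flow_sum:
  assumes "flow z \<nu>" "h \<in> {1..H}" shows "(\<Sum>x\<in>UNIV. z h x) = 1"
  using assms(2)
proof (induction h)
  case 0 then show ?case by simp
next
  case (Suc k)
  show ?case
  proof (cases "k = 0")
    case True
    then have "ET (z 1) = \<nu>" using assms(1) Suc.prems unfolding flow_def by auto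
    then show ?thesis using True nu_sum sum_ET[of "z 1"] by simp
  next
    case False
    then have "ET (z (Suc k)) = FT f (z k)" using assms(1) Suc.prems unfolding flow_def by auto
    then have "(\<Sum>x\<in>UNIV. z (Suc k) x) = (\<Sum>x\<in>UNIV. z k x)"
      using sum_ET[of "z (Suc k)"] sum_FT[of "z k"] by simp
    also have "\<dots> = 1" using Suc.IH Suc.prems False by simp
    finally show ?thesis .
  qed
qed

lemma feasible_iff:
  "feasible f \<nu> H d \<longleftrightarrow> (\<forall>h\<in>{1..H}. \<forall>x. 0 \<le> d h x) \<and> flow d \<nu>"
  using flow_sum[of d] unfolding feasible_def flow_def simplex_def by blast

lemma telescope:
  assumes H1: "1 \<le> H" and fl: "flow z c" and V0: "V (Suc H) = (\<lambda>s. 0)"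
  shows "(\<Sum>h=1..H. (\<Sum>x\<in>UNIV. z h x * Fop f (V (h+1)) x) - (\<Sum>x\<in>UNIV. z h x * V h (fst x)))
         = - (\<Sum>s\<in>UNIV. c s * V 1 s)"
proof -
  define a where "a h = (\<Sum>s\<in>UNIV. ET (z h) s * V h s)" for h
  have "(\<Sum>x\<in>UNIV. z h x * Fop f (V (h+1)) x) - (\<Sum>x\<in>UNIV. z h x * V h (fst x)) = a (Suc h) - a h"
    if h: "h \<in> {1..H}" for h
  proof -
    have "(\<Sum>s'\<in>UNIV. FT f (z h) s' * V (h+1) s') = a (Suc h)"
    proof (cases "h < H")
      case True
      then have "ET (z (Suc h)) = FT f (z h)" using fl h unfolding flow_def by auto
      then show ?thesis unfolding a_def by simp
    next
      case False
      then have "h = H" using h by auto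
      then show ?thesis unfolding a_def using V0 by simp
    qed
    then show ?thesis unfolding inner_Fop inner_fst a_def by simp
  qed
  then have "(\<Sum>h=1..H. (\<Sum>x\<in>UNIV. z h x * Fop f (V (h+1)) x) - (\<Sum>x\<in>UNIV. z h x * V h (fst x)))
     = (\<Sum>h=1..H. a (Suc h) - a h)" by (intro sum.cong) auto
  also have "\<dots> = a (Suc H) - a 1" using H1 by (intro sum_Suc_diff) simp
  also have "a (Suc H) = 0" unfolding a_def using V0 by simp
  also have "a 1 = (\<Sum>s\<in>UNIV. c s * V 1 s)" unfolding a_def using fl H1 unfolding flow_def by auto
  finally show ?thesis by simp
qed

end

lemma pol_eq: "pol d a s = d (s, a) / ET d s"
  by (simp add: pol_def ET_def)

context mdp begin

definition ell :: "nat \<Rightarrow> 's \<times> 'a \<Rightarrow> real" where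
  "ell h x = r h x + (ln (dt h x) + ln (pol (dt h) (snd x) (fst x))) / \<beta>"

definition eobj :: "nat \<Rightarrow> ('s \<times> 'a \<Rightarrow> real) \<Rightarrow> real" where
  "eobj h d = (\<Sum>x\<in>UNIV. d x * ell h x) - 2 / \<beta> * (\<Sum>x\<in>UNIV. xlnx (d x))
      + 1 / \<beta> * (\<Sum>s\<in>UNIV. xlnx (ET d s))"

lemma ET_pos: assumes "\<forall>x. 0 < z x" shows "0 < ET z s"
  unfolding ET_def using assms by (intro sum_pos) auto

lemma ETdt_pos: "h \<in> {1..H} \<Longrightarrow> 0 < ET (dt h) s"
  using dt_pos ET_pos by blast

lemma poldt_pos: "h \<in> {1..H} \<Longrightarrow> 0 < pol (dt h) a s"
  using ETdt_pos[of h s] dt_pos by (simp add: pol_eq)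

lemma obj_eq:
  assumes h: "h \<in> {1..H}" and d: "\<forall>x. 0 \<le> d x"
  shows "inner_sa d (r h) - relent d (dt h) / \<beta> - condrelent d (dt h) / \<beta> = eobj h d"
proof -
  let ?pt = "\<lambda>x. pol (dt h) (snd x) (fst x)"
  have T1: "d x * ln (d x / dt h x) = xlnx (d x) - d x * ln (dt h x)" for x
  proof (cases "d x = 0")
    case True then show ?thesis by (simp add: xlnx_def)
  next
    case False then have "0 < d x" using d[rule_format, of x] by linarith
    moreover have "0 < dt h x" using dt_pos h by blast
    ultimately show ?thesis by (simp add: xlnx_def ln_divide_pos algebra_simps)
  qed
  have T2: "d x * ln (pol d (snd x) (fst x) / ?pt x)
       = xlnx (d x) - d x * ln (ET d (fst x)) - d x * ln (?pt x)" for x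
  proof (cases "d x = 0")
    case True then show ?thesis by (simp add: xlnx_def)
  next
    case False then have dp: "0 < d x" using d[rule_format, of x] by linarith
    have "d x \<le> ET d (fst x)" using le_ET[OF d, of "fst x" "snd x"] by simp
    then have ep: "0 < ET d (fst x)" using dp by simp
    have pp: "0 < pol d (snd x) (fst x)" using dp ep by (simp add: pol_eq)
    have "ln (pol d (snd x) (fst x)) = ln (d x) - ln (ET d (fst x))"
      using dp ep by (simp add: pol_eq ln_divide_pos)
    then have "d x * ln (pol d (snd x) (fst x) / ?pt x) = d x * ((ln (d x) - ln (ET d (fst x))) - ln (?pt x))"
      using pp poldt_pos[OF h] by (simp add: ln_divide_pos)
    then show ?thesis by (simp add: xlnx_def algebra_simps)
  qed
  have R: "relent d (dt h) = (\<Sum>x\<in>UNIV. xlnx (d x)) - (\<Sum>x\<in>UNIV. d x * ln (dt h x))"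
    unfolding relent_def T1 by (simp add: sum_subtractf)
  have X: "(\<Sum>x\<in>UNIV. d x * ln (ET d (fst x))) = (\<Sum>s\<in>UNIV. xlnx (ET d s))"
    unfolding inner_fst[of d "\<lambda>s. ln (ET d s)"] by (simp add: xlnx_def)
  have C: "condrelent d (dt h) = (\<Sum>x\<in>UNIV. xlnx (d x)) - (\<Sum>s\<in>UNIV. xlnx (ET d s))
       - (\<Sum>x\<in>UNIV. d x * ln (?pt x))"
    unfolding condrelent_def T2 X[symmetric] by (simp add: sum_subtractf)
  have L: "(\<Sum>x\<in>UNIV. d x * ell h x) = inner_sa d (r h)
      + ((\<Sum>x\<in>UNIV. d x * ln (dt h x)) + (\<Sum>x\<in>UNIV. d x * ln (?pt x))) / \<beta>"
    unfolding ell_def inner_sa_def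
    by (simp add: distrib_left sum.distrib sum_divide_distrib[symmetric] add_divide_distrib)
  show ?thesis unfolding eobj_def L R C using beta_pos by (simp add: field_simps)
qed

lemma objective_eq:
  assumes "\<forall>h\<in>{1..H}. \<forall>x. 0 \<le> d h x"
  shows "objective \<beta> H r dt d = (\<Sum>h=1..H. eobj h (d h))"
  unfolding objective_def using obj_eq assms by (intro sum.cong) auto

end

context mdp begin

definition K1 :: "nat \<Rightarrow> ('s \<times> 'a \<Rightarrow> real) \<Rightarrow> ('s \<times> 'a \<Rightarrow> real) \<Rightarrow> real" where
  "K1 h d y = (\<Sum>x\<in>UNIV. (y x - d x) * ell h x) - 2 / \<beta> * (\<Sum>x\<in>UNIV. xlnx (y x) - xlnx (d x))
     + 1 / \<beta> * (\<Sum>s\<in>UNIV. if ET d s = 0 then xlnx (ET y s) else (ln (ET d s) + 1) * (ET y s - ET d s))"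

lemma step1_h:
  assumes d: "\<forall>x. 0 \<le> d x" and y: "\<forall>x. 0 < y x" and t0: "0 < t" and t1: "t \<le> 1"
  shows "eobj h d + t * K1 h d y - t * ln t / \<beta> * (\<Sum>x\<in>UNIV. if d x = 0 then y x else 0)
         \<le> eobj h (\<lambda>x. (1 - t) * d x + t * y x)"
proof -
  define m where "m = (\<Sum>x\<in>UNIV. if d x = 0 then y x else 0)"
  define m' where "m' = (\<Sum>s\<in>UNIV. if ET d s = 0 then ET y s else 0)"
  define c where "c s = (if ET d s = 0 then xlnx (ET y s) else (ln (ET d s) + 1) * (ET y s - ET d s))" for s
  define L where "L = t * ln t"
  let ?dt = "\<lambda>x. (1 - t) * d x + t * y x"
  have A: "xlnx (?dt x) \<le> xlnx (d x) + t * (xlnx (y x) - xlnx (d x)) + L * (if d x = 0 then y x else 0)" for x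
  proof (cases "d x = 0")
    case True
    have "0 < y x" using y by blast
    then show ?thesis using True t0 by (simp add: L_def xlnx_def ln_mult_pos algebra_simps)
  next
    case False
    then have dp: "0 < d x" using d[rule_format, of x] by linarith
    have yp: "0 < y x" using y by blast
    define mm where "mm = ?dt x"
    have mp: "0 < mm" unfolding mm_def using dp yp t0 t1
      by (smt (verit) mult_nonneg_nonneg mult_pos_pos)
    have i1: "xlnx mm + (ln mm + 1) * (d x - mm) \<le> xlnx (d x)" using xlnx_tangent[OF mp] dp by simp
    have i2: "xlnx mm + (ln mm + 1) * (y x - mm) \<le> xlnx (y x)" using xlnx_tangent[OF mp] yp by simp
    have j1: "(1 - t) * (xlnx mm + (ln mm + 1) * (d x - mm)) \<le> (1 - t) * xlnx (d x)"
      using i1 t1 by (intro mult_left_mono) auto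
    have j2: "t * (xlnx mm + (ln mm + 1) * (y x - mm)) \<le> t * xlnx (y x)"
      using i2 t0 by (intro mult_left_mono) auto
    have "(1 - t) * (xlnx mm + (ln mm + 1) * (d x - mm)) + t * (xlnx mm + (ln mm + 1) * (y x - mm))
          = xlnx mm + (ln mm + 1) * ((1 - t) * d x + t * y x - mm)" by (simp add: algebra_simps)
    also have "(1 - t) * d x + t * y x - mm = 0" unfolding mm_def by simp
    finally have "xlnx mm \<le> (1 - t) * xlnx (d x) + t * xlnx (y x)" using j1 j2 by simp
    then show ?thesis using False unfolding mm_def by (simp add: algebra_simps)
  qed
  have B: "xlnx (ET d s) + t * c s + L * (if ET d s = 0 then ET y s else 0) \<le> xlnx (ET ?dt s)" for s
  proof -
    have E: "ET ?dt s = (1 - t) * ET d s + t * ET y s" by (rule ET_lin)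
    have Yp: "0 < ET y s" using ET_pos y by blast
    show ?thesis
    proof (cases "ET d s = 0")
      case True
      then show ?thesis using E Yp t0 by (simp add: c_def L_def xlnx_def ln_mult_pos algebra_simps)
    next
      case False
      then have ap: "0 < ET d s" using ET_nonneg[OF d, of s] by linarith
      have "0 \<le> ET ?dt s" unfolding E using ET_nonneg[OF d, of s] Yp t0 t1
        by (smt (verit) mult_nonneg_nonneg)
      from xlnx_tangent[OF ap this] have T: "xlnx (ET d s) + (ln (ET d s) + 1) * (ET ?dt s - ET d s) \<le> xlnx (ET ?dt s)" .
      have D: "ET ?dt s - ET d s = t * (ET y s - ET d s)" unfolding E by (simp add: algebra_simps)
      have tc: "t * c s = (ln (ET d s) + 1) * (ET ?dt s - ET d s)"
        unfolding c_def D using False by (simp add: algebra_simps)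
      have "xlnx (ET d s) + t * c s \<le> xlnx (ET ?dt s)" using T tc by linarith
      then show ?thesis using False by simp
    qed
  qed
  have C: "m' \<le> m"
  proof -
    have "m' = (\<Sum>s\<in>UNIV. \<Sum>a\<in>UNIV. if ET d s = 0 then y (s, a) else 0)"
      unfolding m'_def by (intro sum.cong) (auto simp: ET_def)
    also have "\<dots> \<le> (\<Sum>s\<in>UNIV. \<Sum>a\<in>UNIV. if d (s, a) = 0 then y (s, a) else 0)"
    proof (intro sum_mono)
      fix s a
      show "(if ET d s = 0 then y (s, a) else 0) \<le> (if d (s, a) = 0 then y (s, a) else 0)"
      proof (cases "ET d s = 0")
        case True
        then have "d (s, a) = 0" using le_ET[OF d, of s a] d by (metis order_antisym)
        then show ?thesis using True by simp
      next
        case False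
        then show ?thesis using y by (auto simp: less_imp_le)
      qed
    qed
    also have "\<dots> = m" unfolding m_def by (simp add: sum_pair)
    finally show ?thesis .
  qed
  have Lneg: "L \<le> 0" unfolding L_def using t0 t1 by (simp add: mult_nonneg_nonpos)
  have SA: "(\<Sum>x\<in>UNIV. xlnx (?dt x)) \<le> (\<Sum>x\<in>UNIV. xlnx (d x)) + t * (\<Sum>x\<in>UNIV. xlnx (y x) - xlnx (d x)) + L * m"
  proof -
    have "(\<Sum>x\<in>UNIV. xlnx (?dt x)) \<le> (\<Sum>x\<in>UNIV. xlnx (d x) + t * (xlnx (y x) - xlnx (d x)) + L * (if d x = 0 then y x else 0))"
      by (intro sum_mono A)
    also have "\<dots> = (\<Sum>x\<in>UNIV. xlnx (d x)) + t * (\<Sum>x\<in>UNIV. xlnx (y x) - xlnx (d x)) + L * m"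
      unfolding m_def by (simp add: sum.distrib sum_distrib_left)
    finally show ?thesis .
  qed
  have SB: "(\<Sum>s\<in>UNIV. xlnx (ET d s)) + t * (\<Sum>s\<in>UNIV. c s) + L * m' \<le> (\<Sum>s\<in>UNIV. xlnx (ET ?dt s))"
  proof -
    have "(\<Sum>s\<in>UNIV. xlnx (ET d s)) + t * (\<Sum>s\<in>UNIV. c s) + L * m'
        = (\<Sum>s\<in>UNIV. xlnx (ET d s) + t * c s + L * (if ET d s = 0 then ET y s else 0))"
      unfolding m'_def by (simp add: sum.distrib sum_distrib_left)
    also have "\<dots> \<le> (\<Sum>s\<in>UNIV. xlnx (ET ?dt s))" by (intro sum_mono B)
    finally show ?thesis .
  qed
  have SL: "(\<Sum>x\<in>UNIV. ?dt x * ell h x) = (\<Sum>x\<in>UNIV. d x * ell h x) + t * (\<Sum>x\<in>UNIV. (y x - d x) * ell h x)"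
    by (simp add: sum.distrib sum_distrib_left algebra_simps sum_subtractf)
  have Lm: "L * m \<le> L * m'" using C Lneg by (simp add: mult_left_mono_neg)
  have ib: "0 < 1 / \<beta>" using beta_pos by simp
  have SA': "2 / \<beta> * (\<Sum>x\<in>UNIV. xlnx (?dt x)) \<le> 2 / \<beta> * ((\<Sum>x\<in>UNIV. xlnx (d x)) + t * (\<Sum>x\<in>UNIV. xlnx (y x) - xlnx (d x)) + L * m)"
    using SA beta_pos by (intro mult_left_mono) auto
  have SB': "1 / \<beta> * ((\<Sum>s\<in>UNIV. xlnx (ET d s)) + t * (\<Sum>s\<in>UNIV. c s) + L * m) \<le> 1 / \<beta> * (\<Sum>s\<in>UNIV. xlnx (ET ?dt s))"
    using SB Lm beta_pos by (intro mult_left_mono) auto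
  have goal: "eobj h d + t * K1 h d y - L / \<beta> * m
     = (\<Sum>x\<in>UNIV. d x * ell h x) + t * (\<Sum>x\<in>UNIV. (y x - d x) * ell h x)
       - 2 / \<beta> * ((\<Sum>x\<in>UNIV. xlnx (d x)) + t * (\<Sum>x\<in>UNIV. xlnx (y x) - xlnx (d x)) + L * m)
       + 1 / \<beta> * ((\<Sum>s\<in>UNIV. xlnx (ET d s)) + t * (\<Sum>s\<in>UNIV. c s) + L * m)"
    unfolding eobj_def K1_def c_def by (simp add: algebra_simps)
  have "eobj h d + t * K1 h d y - L / \<beta> * m \<le> eobj h ?dt"
    unfolding goal unfolding eobj_def SL using SA' SB' by linarith
  then show ?thesis unfolding L_def m_def by simp
qed

end

locale mdp_opt = mdp f \<nu> H \<beta> r dt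
  for f :: "'s::finite \<Rightarrow> 'a::finite \<Rightarrow> 's \<Rightarrow> real"
    and \<nu> :: "'s \<Rightarrow> real" and H :: nat and \<beta> :: real
    and r dt :: "nat \<Rightarrow> 's \<times> 'a \<Rightarrow> real" +
  fixes d :: "nat \<Rightarrow> 's \<times> 'a \<Rightarrow> real"
  assumes d_feas: "feasible f \<nu> H d"
    and d_max: "\<forall>d'. feasible f \<nu> H d' \<longrightarrow> objective \<beta> H r dt d' \<le> objective \<beta> H r dt d"
begin

lemma d_nonneg: "h \<in> {1..H} \<Longrightarrow> 0 \<le> d h x"
  using d_feas unfolding feasible_iff by blast

lemma d_flow: "flow d \<nu>"
  using d_feas unfolding feasible_iff by blast

lemma dt_flow: "flow dt \<nu>"
  using dt_feas unfolding feasible_iff by blast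

lemma d_pos: assumes h0: "h0 \<in> {1..H}" shows "0 < d h0 x0"
proof (rule ccontr)
  assume "\<not> 0 < d h0 x0"
  then have z: "d h0 x0 = 0" using d_nonneg[OF h0, of x0] by linarith
  define m where "m h = (\<Sum>x\<in>UNIV. if d h x = 0 then dt h x else 0)" for h
  define M where "M = (\<Sum>h=1..H. m h)"
  define K where "K = (\<Sum>h=1..H. K1 h (d h) (dt h))"
  have mnn: "0 \<le> m h" if "h \<in> {1..H}" for h
    unfolding m_def using dt_pos that by (intro sum_nonneg) (auto simp: less_imp_le)
  have "dt h0 x0 \<le> m h0" unfolding m_def
    using member_le_sum[of x0 UNIV "\<lambda>x. if d h0 x = 0 then dt h0 x else 0"] z dt_pos h0
    by (auto simp: less_imp_le)
  then have mpos: "0 < m h0" using dt_pos h0 by (meson less_le_trans)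
  have "m h0 \<le> M" unfolding M_def using member_le_sum[of h0 "{1..H}" m] mnn h0 by auto
  then have Mpos: "0 < M" using mpos by linarith
  have objd: "objective \<beta> H r dt d = (\<Sum>h=1..H. eobj h (d h))"
    using objective_eq d_nonneg by blast
  have key: "t * K - t * ln t / \<beta> * M \<le> 0" if t0: "0 < t" and t1: "t \<le> 1" for t
  proof -
    define dd where "dd h x = (1 - t) * d h x + t * dt h x" for h x
    have ddnn: "\<forall>h\<in>{1..H}. \<forall>x. 0 \<le> dd h x"
      unfolding dd_def using d_nonneg dt_pos t0 t1
      by (smt (verit) mult_nonneg_nonneg)
    have "flow dd \<nu>" unfolding flow_def
    proof
      fix h assume h: "h \<in> {1..H}"
      have "ET (dd h) = (\<lambda>s. (1 - t) * ET (d h) s + t * ET (dt h) s)"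
        unfolding dd_def by (rule ext, rule ET_lin)
      also have "\<dots> = (if h = 1 then \<nu> else FT f (dd (h - 1)))"
      proof (cases "h = 1")
        case True
        then have "ET (d h) = \<nu>" "ET (dt h) = \<nu>" using d_flow dt_flow h unfolding flow_def by auto
        then show ?thesis using True by (simp add: algebra_simps)
      next
        case False
        then have "ET (d h) = FT f (d (h - 1))" "ET (dt h) = FT f (dt (h - 1))"
          using d_flow dt_flow h unfolding flow_def by auto
        then show ?thesis using False unfolding dd_def by (intro ext) (simp only: FT_lin if_False)
      qed
      finally show "ET (dd h) = (if h = 1 then \<nu> else FT f (dd (h - 1)))" .
    qed
    then have feas: "feasible f \<nu> H dd" using ddnn feasible_iff by blast
    have "objective \<beta> H r dt d + (t * K - t * ln t / \<beta> * M)
        = (\<Sum>h=1..H. eobj h (d h) + t * K1 h (d h) (dt h) - t * ln t / \<beta> * m h)"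
      unfolding objd K_def M_def
      by (simp add: sum.distrib sum_subtractf sum_distrib_left)
    also have "\<dots> \<le> (\<Sum>h=1..H. eobj h (dd h))"
    proof (intro sum_mono)
      fix h assume h: "h \<in> {1..H}"
      show "eobj h (d h) + t * K1 h (d h) (dt h) - t * ln t / \<beta> * m h \<le> eobj h (dd h)"
        unfolding m_def dd_def
        using step1_h[of "d h" "dt h" t h] d_nonneg[OF h] dt_pos h t0 t1 by blast
    qed
    also have "\<dots> = objective \<beta> H r dt dd" using objective_eq ddnn by simp
    also have "\<dots> \<le> objective \<beta> H r dt d" using d_max feas by blast
    finally show ?thesis by linarith
  qed
  define t where "t = exp (- (\<bar>K\<bar> * \<beta> / M) - 1)"
  have t0: "0 < t" unfolding t_def by simp
  have "0 \<le> \<bar>K\<bar> * \<beta> / M" using Mpos beta_pos by simp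
  then have "- (\<bar>K\<bar> * \<beta> / M) - 1 \<le> 0" by linarith
  then have t1: "t \<le> 1" unfolding t_def by simp
  have lt: "ln t = - (\<bar>K\<bar> * \<beta> / M) - 1" unfolding t_def by simp
  from key[OF t0 t1] have "t * (K - ln t / \<beta> * M) \<le> 0" by (simp add: algebra_simps)
  then have "K - ln t / \<beta> * M \<le> 0" using t0 by (simp add: mult_le_0_iff)
  moreover have "ln t / \<beta> * M = - \<bar>K\<bar> - M / \<beta>" unfolding lt using Mpos beta_pos
    by (simp add: field_simps)
  ultimately have "K + \<bar>K\<bar> + M / \<beta> \<le> 0" by simp
  moreover have "0 < M / \<beta>" using Mpos beta_pos by simp
  ultimately show False by linarith
qed

end

context mdp begin

definition Gr :: "nat \<Rightarrow> ('s \<times> 'a \<Rightarrow> real) \<Rightarrow> 's \<times> 'a \<Rightarrow> real" where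
  "Gr h d x = ell h x - 2 / \<beta> * (ln (d x) + 1) + 1 / \<beta> * (ln (ET d (fst x)) + 1)"

lemma step2_h:
  assumes d: "\<forall>x. 0 < d x" and e: "\<forall>x. 0 < d x + t * \<delta> x"
  shows "eobj h d + t * (\<Sum>x\<in>UNIV. \<delta> x * Gr h d x) - t^2 * (2 / \<beta> * (\<Sum>x\<in>UNIV. (\<delta> x)^2 / d x))
         \<le> eobj h (\<lambda>x. d x + t * \<delta> x)"
proof -
  let ?dt = "\<lambda>x. d x + t * \<delta> x"
  have A: "xlnx (?dt x) \<le> xlnx (d x) + t * (\<delta> x * (ln (d x) + 1)) + t^2 * ((\<delta> x)^2 / d x)" for x
  proof -
    have "xlnx (?dt x) \<le> xlnx (d x) + (ln (d x) + 1) * (?dt x - d x) + (?dt x - d x)^2 / d x"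
      using xlnx_upper[of "d x" "?dt x"] d e by blast
    then show ?thesis by (simp add: algebra_simps power_mult_distrib)
  qed
  have Edt: "ET ?dt s = ET d s + t * ET \<delta> s" for s
    by (simp add: ET_def sum.distrib sum_distrib_left)
  have B: "xlnx (ET d s) + t * (ET \<delta> s * (ln (ET d s) + 1)) \<le> xlnx (ET ?dt s)" for s
  proof -
    have ap: "0 < ET d s" using ET_pos d by blast
    have "0 \<le> ET ?dt s" using ET_nonneg[of ?dt s] e by (simp add: less_imp_le)
    from xlnx_tangent[OF ap this] show ?thesis unfolding Edt by (simp add: algebra_simps)
  qed
  have SA: "(\<Sum>x\<in>UNIV. xlnx (?dt x)) \<le> (\<Sum>x\<in>UNIV. xlnx (d x)) + t * (\<Sum>x\<in>UNIV. \<delta> x * (ln (d x) + 1))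
       + t^2 * (\<Sum>x\<in>UNIV. (\<delta> x)^2 / d x)"
  proof -
    have "(\<Sum>x\<in>UNIV. xlnx (?dt x)) \<le> (\<Sum>x\<in>UNIV. xlnx (d x) + t * (\<delta> x * (ln (d x) + 1)) + t^2 * ((\<delta> x)^2 / d x))"
      by (intro sum_mono A)
    also have "\<dots> = (\<Sum>x\<in>UNIV. xlnx (d x)) + t * (\<Sum>x\<in>UNIV. \<delta> x * (ln (d x) + 1))
       + t^2 * (\<Sum>x\<in>UNIV. (\<delta> x)^2 / d x)"
      by (simp add: sum.distrib sum_distrib_left)
    finally show ?thesis .
  qed
  have X: "(\<Sum>s\<in>UNIV. ET \<delta> s * (ln (ET d s) + 1)) = (\<Sum>x\<in>UNIV. \<delta> x * (ln (ET d (fst x)) + 1))"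
    using inner_fst[of \<delta> "\<lambda>s. ln (ET d s) + 1"] by simp
  have SB: "(\<Sum>s\<in>UNIV. xlnx (ET d s)) + t * (\<Sum>x\<in>UNIV. \<delta> x * (ln (ET d (fst x)) + 1)) \<le> (\<Sum>s\<in>UNIV. xlnx (ET ?dt s))"
  proof -
    have "(\<Sum>s\<in>UNIV. xlnx (ET d s)) + t * (\<Sum>x\<in>UNIV. \<delta> x * (ln (ET d (fst x)) + 1))
        = (\<Sum>s\<in>UNIV. xlnx (ET d s) + t * (ET \<delta> s * (ln (ET d s) + 1)))"
      unfolding X[symmetric] by (simp add: sum.distrib sum_distrib_left)
    also have "\<dots> \<le> (\<Sum>s\<in>UNIV. xlnx (ET ?dt s))" by (intro sum_mono B)
    finally show ?thesis .
  qed
  have SL: "(\<Sum>x\<in>UNIV. ?dt x * ell h x) = (\<Sum>x\<in>UNIV. d x * ell h x) + t * (\<Sum>x\<in>UNIV. \<delta> x * ell h x)"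
    by (simp add: sum.distrib sum_distrib_left algebra_simps)
  have SA': "2 / \<beta> * (\<Sum>x\<in>UNIV. xlnx (?dt x)) \<le> 2 / \<beta> * ((\<Sum>x\<in>UNIV. xlnx (d x)) + t * (\<Sum>x\<in>UNIV. \<delta> x * (ln (d x) + 1))
       + t^2 * (\<Sum>x\<in>UNIV. (\<delta> x)^2 / d x))"
    using SA beta_pos by (intro mult_left_mono) auto
  have SB': "1 / \<beta> * ((\<Sum>s\<in>UNIV. xlnx (ET d s)) + t * (\<Sum>x\<in>UNIV. \<delta> x * (ln (ET d (fst x)) + 1)))
     \<le> 1 / \<beta> * (\<Sum>s\<in>UNIV. xlnx (ET ?dt s))"
    using SB beta_pos by (intro mult_left_mono) auto
  have G: "(\<Sum>x\<in>UNIV. \<delta> x * Gr h d x) = (\<Sum>x\<in>UNIV. \<delta> x * ell h x)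
     - 2 / \<beta> * (\<Sum>x\<in>UNIV. \<delta> x * (ln (d x) + 1)) + 1 / \<beta> * (\<Sum>x\<in>UNIV. \<delta> x * (ln (ET d (fst x)) + 1))"
  proof -
    have "\<delta> x * Gr h d x = \<delta> x * ell h x - 2 / \<beta> * (\<delta> x * (ln (d x) + 1))
       + 1 / \<beta> * (\<delta> x * (ln (ET d (fst x)) + 1))" for x
      by (simp add: Gr_def algebra_simps add_divide_distrib)
    then show ?thesis by (simp only: sum.distrib sum_subtractf sum_distrib_left[symmetric])
  qed
  have goal: "eobj h d + t * (\<Sum>x\<in>UNIV. \<delta> x * Gr h d x) - t^2 * (2 / \<beta> * (\<Sum>x\<in>UNIV. (\<delta> x)^2 / d x))
     = (\<Sum>x\<in>UNIV. d x * ell h x) + t * (\<Sum>x\<in>UNIV. \<delta> x * ell h x)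
       - 2 / \<beta> * ((\<Sum>x\<in>UNIV. xlnx (d x)) + t * (\<Sum>x\<in>UNIV. \<delta> x * (ln (d x) + 1))
       + t^2 * (\<Sum>x\<in>UNIV. (\<delta> x)^2 / d x))
       + 1 / \<beta> * ((\<Sum>s\<in>UNIV. xlnx (ET d s)) + t * (\<Sum>x\<in>UNIV. \<delta> x * (ln (ET d (fst x)) + 1)))"
    unfolding eobj_def G by (simp add: algebra_simps)
  also have "\<dots> \<le> eobj h ?dt" unfolding eobj_def SL using SA' SB' by linarith
  finally show ?thesis .
qed

end

context mdp_opt begin

lemma stationary:
  assumes H1: "1 \<le> H" and fl: "flow \<delta> (\<lambda>s. 0)"
  shows "(\<Sum>h=1..H. \<Sum>x\<in>UNIV. \<delta> h x * Gr h (d h) x) = 0"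
proof -
  define \<Gamma> where "\<Gamma> = (\<Sum>h=1..H. \<Sum>x\<in>UNIV. \<delta> h x * Gr h (d h) x)"
  define C where "C = (\<Sum>h=1..H. 2 / \<beta> * (\<Sum>x\<in>UNIV. (\<delta> h x)^2 / d h x))"
  have Cnn: "0 \<le> C" unfolding C_def using beta_pos d_pos
    by (intro sum_nonneg mult_nonneg_nonneg divide_nonneg_nonneg) (auto simp: less_imp_le)
  have ev: "\<forall>\<^sub>F t in nhds 0. \<forall>h\<in>{1..H}. \<forall>x. 0 < d h x + t * \<delta> h x"
  proof (intro eventually_ball_finite ballI eventually_all_finite allI)
    fix h x assume h: "h \<in> {1..H}"
    have "((\<lambda>t. d h x + t * \<delta> h x) \<longlongrightarrow> d h x + 0 * \<delta> h x) (nhds 0)"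
      by (intro tendsto_intros filterlim_ident)
    then have "((\<lambda>t. d h x + t * \<delta> h x) \<longlongrightarrow> d h x) (nhds 0)" by simp
    then show "\<forall>\<^sub>F t in nhds 0. 0 < d h x + t * \<delta> h x"
      using d_pos[OF h] by (rule order_tendstoD(1))
  qed simp
  then obtain \<epsilon> where \<epsilon>0: "0 < \<epsilon>" and \<epsilon>: "\<And>t. dist t 0 < \<epsilon> \<Longrightarrow> \<forall>h\<in>{1..H}. \<forall>x. 0 < d h x + t * \<delta> h x"
    unfolding eventually_nhds_metric by blast
  have objd: "objective \<beta> H r dt d = (\<Sum>h=1..H. eobj h (d h))"
    using objective_eq d_nonneg by blast
  have key: "t * \<Gamma> \<le> t^2 * C" if t: "\<bar>t\<bar> < \<epsilon>" for t
  proof -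
    define dd where "dd h x = d h x + t * \<delta> h x" for h x
    have ddp: "\<forall>h\<in>{1..H}. \<forall>x. 0 < dd h x" unfolding dd_def using \<epsilon> t by simp
    have "flow dd \<nu>" unfolding flow_def
    proof
      fix h assume h: "h \<in> {1..H}"
      have E: "ET (dd h) = (\<lambda>s. ET (d h) s + t * ET (\<delta> h) s)"
        unfolding dd_def by (rule ext) (simp add: ET_def sum.distrib sum_distrib_left)
      show "ET (dd h) = (if h = 1 then \<nu> else FT f (dd (h - 1)))"
      proof (cases "h = 1")
        case True
        then have "ET (d h) = \<nu>" "ET (\<delta> h) = (\<lambda>s. 0)" using d_flow fl h unfolding flow_def by auto
        then show ?thesis using True E by simp
      next
        case False
        then have "ET (d h) = FT f (d (h - 1))" "ET (\<delta> h) = FT f (\<delta> (h - 1))"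
          using d_flow fl h unfolding flow_def by auto
        then show ?thesis using False E unfolding dd_def
          by (intro ext) (simp add: FT_def sum.distrib sum_distrib_left algebra_simps)
      qed
    qed
    then have feas: "feasible f \<nu> H dd" using ddp feasible_iff by (simp add: less_imp_le)
    have "objective \<beta> H r dt d + (t * \<Gamma> - t^2 * C)
        = (\<Sum>h=1..H. eobj h (d h) + t * (\<Sum>x\<in>UNIV. \<delta> h x * Gr h (d h) x)
             - t^2 * (2 / \<beta> * (\<Sum>x\<in>UNIV. (\<delta> h x)^2 / d h x)))"
      unfolding objd \<Gamma>_def C_def by (simp add: sum.distrib sum_subtractf sum_distrib_left)
    also have "\<dots> \<le> (\<Sum>h=1..H. eobj h (dd h))"
    proof (intro sum_mono)
      fix h assume h: "h \<in> {1..H}"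
      show "eobj h (d h) + t * (\<Sum>x\<in>UNIV. \<delta> h x * Gr h (d h) x)
             - t^2 * (2 / \<beta> * (\<Sum>x\<in>UNIV. (\<delta> h x)^2 / d h x)) \<le> eobj h (dd h)"
        unfolding dd_def using step2_h[of "d h" t "\<delta> h" h] d_pos h ddp unfolding dd_def by blast
    qed
    also have "\<dots> = objective \<beta> H r dt dd" using objective_eq ddp by (simp add: less_imp_le)
    also have "\<dots> \<le> objective \<beta> H r dt d" using d_max feas by blast
    finally show ?thesis by linarith
  qed
  show ?thesis
  proof (rule ccontr)
    assume "\<Gamma>_ne": "(\<Sum>h=1..H. \<Sum>x\<in>UNIV. \<delta> h x * Gr h (d h) x) \<noteq> 0"
    then have G0: "0 < \<bar>\<Gamma>\<bar>" unfolding \<Gamma>_def by simp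
    define \<tau> where "\<tau> = min (\<epsilon> / 2) (\<bar>\<Gamma>\<bar> / (C + 1))"
    have \<tau>0: "0 < \<tau>" unfolding \<tau>_def using \<epsilon>0 G0 Cnn by simp
    have \<tau>\<epsilon>: "\<tau> < \<epsilon>" unfolding \<tau>_def using \<epsilon>0 by simp
    have \<tau>G: "\<tau> \<le> \<bar>\<Gamma>\<bar> / (C + 1)" unfolding \<tau>_def by simp
    have "\<tau> * \<bar>\<Gamma>\<bar> \<le> \<tau>^2 * C"
    proof (cases "0 < \<Gamma>")
      case True
      then show ?thesis using key[of \<tau>] \<tau>0 \<tau>\<epsilon> by simp
    next
      case False
      then show ?thesis using key[of "- \<tau>"] \<tau>0 \<tau>\<epsilon> by simp
    qed
    then have "\<bar>\<Gamma>\<bar> \<le> \<tau> * C" using \<tau>0 by (simp add: power2_eq_square mult.assoc)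
    also have "\<dots> \<le> \<bar>\<Gamma>\<bar> / (C + 1) * C" using \<tau>G Cnn by (intro mult_right_mono) auto
    also have "\<dots> < \<bar>\<Gamma>\<bar>" using G0 Cnn by (simp add: field_simps)
    finally show False by simp
  qed
qed

end

context mdp_opt begin

primrec lamr :: "nat \<Rightarrow> 's \<Rightarrow> real" where
  "lamr 0 = (\<lambda>s. 0)"
| "lamr (Suc k) = (\<lambda>s. \<Sum>b\<in>UNIV. pol (d (H - k)) b s * (Gr (H - k) (d (H - k)) (s, b) + Fop f (lamr k) (s, b)))"

definition lam :: "nat \<Rightarrow> 's \<Rightarrow> real" where "lam h = lamr (Suc H - h)"

lemma lam_top: "lam (Suc H) = (\<lambda>s. 0)" unfolding lam_def by simp

lemma lam_rec: assumes h: "h \<in> {1..H}"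
  shows "lam h s = (\<Sum>b\<in>UNIV. pol (d h) b s * (Gr h (d h) (s, b) + Fop f (lam (Suc h)) (s, b)))"
proof -
  have e1: "Suc H - h = Suc (H - h)" using h by auto
  have e2: "H - (H - h) = h" using h by auto
  have e3: "Suc H - Suc h = H - h" by simp
  show ?thesis unfolding lam_def e1 e3 by (simp add: e2)
qed

lemma ETd_pos: "h \<in> {1..H} \<Longrightarrow> 0 < ET (d h) s"
  using ET_pos d_pos by blast

lemma pol_sum: assumes "h \<in> {1..H}" shows "(\<Sum>b\<in>UNIV. pol (d h) b s) = 1"
proof -
  have "(\<Sum>b\<in>UNIV. pol (d h) b s) = (\<Sum>b\<in>UNIV. d h (s, b)) / ET (d h) s"
    by (simp add: pol_eq sum_divide_distrib)
  also have "\<dots> = 1" using ETd_pos[OF assms, of s] by (simp add: ET_def)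
  finally show ?thesis .
qed

definition Aq :: "nat \<Rightarrow> 's \<times> 'a \<Rightarrow> real" where
  "Aq h x = Gr h (d h) x + Fop f (lam (Suc h)) x - lam h (fst x)"

lemma A_avg: assumes h: "h \<in> {1..H}" shows "(\<Sum>b\<in>UNIV. pol (d h) b s * Aq h (s, b)) = 0"
proof -
  have "(\<Sum>b\<in>UNIV. pol (d h) b s * Aq h (s, b))
      = (\<Sum>b\<in>UNIV. pol (d h) b s * (Gr h (d h) (s, b) + Fop f (lam (Suc h)) (s, b))) - (\<Sum>b\<in>UNIV. pol (d h) b s) * lam h s"
    unfolding Aq_def by (simp add: algebra_simps sum_subtractf sum_distrib_right)
  also have "\<dots> = 0" using lam_rec[OF h, of s] pol_sum[OF h, of s] by simp
  finally show ?thesis .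
qed

lemma Gr_to_A:
  assumes H1: "1 \<le> H" and fl: "flow \<delta> (\<lambda>s. 0)"
  shows "(\<Sum>h=1..H. \<Sum>x\<in>UNIV. \<delta> h x * Gr h (d h) x) = (\<Sum>h=1..H. \<Sum>x\<in>UNIV. \<delta> h x * Aq h x)"
proof -
  have T: "(\<Sum>h=1..H. (\<Sum>x\<in>UNIV. \<delta> h x * Fop f (lam (h+1)) x) - (\<Sum>x\<in>UNIV. \<delta> h x * lam h (fst x))) = 0"
    using telescope[OF H1 fl, of lam] lam_top by simp
  have "(\<Sum>h=1..H. \<Sum>x\<in>UNIV. \<delta> h x * Aq h x) = (\<Sum>h=1..H. (\<Sum>x\<in>UNIV. \<delta> h x * Gr h (d h) x)
     + ((\<Sum>x\<in>UNIV. \<delta> h x * Fop f (lam (h+1)) x) - (\<Sum>x\<in>UNIV. \<delta> h x * lam h (fst x))))"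
    unfolding Aq_def by (intro sum.cong) (simp_all add: algebra_simps sum.distrib sum_subtractf)
  also have "\<dots> = (\<Sum>h=1..H. \<Sum>x\<in>UNIV. \<delta> h x * Gr h (d h) x)" using T by (simp add: sum.distrib)
  finally show ?thesis by simp
qed

primrec dirv :: "nat \<Rightarrow> 's \<Rightarrow> 'a \<Rightarrow> nat \<Rightarrow> 's \<times> 'a \<Rightarrow> real" where
  "dirv h0 s0 a0 0 = (\<lambda>x. 0)"
| "dirv h0 s0 a0 (Suc h) = (if Suc h < h0 then (\<lambda>x. 0)
     else if Suc h = h0 then (\<lambda>x. if fst x = s0 then (if snd x = a0 then 1 else 0) - pol (d h0) (snd x) s0 else 0)
     else (\<lambda>x. FT f (dirv h0 s0 a0 h) (fst x) * pol (d (Suc h)) (snd x) (fst x)))"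

lemma dirv_below: "h < h0 \<Longrightarrow> dirv h0 s0 a0 h = (\<lambda>x. 0)"
  by (cases h) auto

lemma dirv_at: "h0 \<ge> 1 \<Longrightarrow> dirv h0 s0 a0 h0 = (\<lambda>x. if fst x = s0 then (if snd x = a0 then 1 else 0) - pol (d h0) (snd x) s0 else 0)"
  by (cases h0) auto

lemma dirv_above: "h0 < Suc h \<Longrightarrow> dirv h0 s0 a0 (Suc h) = (\<lambda>x. FT f (dirv h0 s0 a0 h) (fst x) * pol (d (Suc h)) (snd x) (fst x))"
  by simp

lemma ET_base: assumes h0: "h0 \<in> {1..H}"
  shows "ET (\<lambda>x. if fst x = s0 then (if snd x = a0 then 1 else 0) - pol (d h0) (snd x) s0 else 0) = (\<lambda>s. 0)"
proof
  fix s
  show "ET (\<lambda>x. if fst x = s0 then (if snd x = a0 then 1 else 0) - pol (d h0) (snd x) s0 else 0) s = 0"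
  proof (cases "s = s0")
    case True
    then show ?thesis using pol_sum[OF h0, of s0] by (simp add: ET_def sum_subtractf)
  next
    case False then show ?thesis by (simp add: ET_def)
  qed
qed

lemma FT_zero: "FT f (\<lambda>x. 0) = (\<lambda>s. 0)" by (simp add: FT_def fun_eq_iff)

lemma dirv_flow: assumes h0: "h0 \<in> {1..H}" shows "flow (dirv h0 s0 a0) (\<lambda>s. 0)"
  unfolding flow_def
proof
  fix h assume h: "h \<in> {1..H}"
  show "ET (dirv h0 s0 a0 h) = (if h = 1 then (\<lambda>s. 0) else FT f (dirv h0 s0 a0 (h - 1)))"
  proof (cases "h < h0")
    case True
    moreover have "ET (\<lambda>x. 0::real) = (\<lambda>s. 0)" by (simp add: ET_def fun_eq_iff)
    ultimately show ?thesis using dirv_below[of h h0 s0 a0] dirv_below[of "h - 1" h0 s0 a0]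
      by (simp add: FT_zero)
  next
    case False
    show ?thesis
    proof (cases "h = h0")
      case True
      then show ?thesis using dirv_at[of h0 s0 a0] ET_base[OF h0, of s0 a0] h0
        dirv_below[of "h - 1" h0 s0 a0] by (simp add: FT_zero)
    next
      case False2: False
      then have hh: "h0 < h" using False by simp
      then obtain k where k: "h = Suc k" by (cases h) auto
      have "h \<noteq> 1" using hh h0 by simp
      moreover have "ET (dirv h0 s0 a0 h) = FT f (dirv h0 s0 a0 k)"
      proof
        fix s
        have "ET (dirv h0 s0 a0 h) s = FT f (dirv h0 s0 a0 k) s * (\<Sum>b\<in>UNIV. pol (d h) b s)"
          unfolding k dirv_above[OF hh[unfolded k]] by (simp add: ET_def sum_distrib_left)
        also have "\<dots> = FT f (dirv h0 s0 a0 k) s" using pol_sum[OF h] by simp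
        finally show "ET (dirv h0 s0 a0 h) s = FT f (dirv h0 s0 a0 k) s" .
      qed
      ultimately show ?thesis using k by simp
    qed
  qed
qed

lemma A_zero: assumes h0: "h0 \<in> {1..H}" shows "Aq h0 (s0, a0) = 0"
proof -
  have H1: "1 \<le> H" using h0 by simp
  let ?\<delta> = "dirv h0 s0 a0"
  have terms: "(\<Sum>x\<in>UNIV. ?\<delta> h x * Aq h x) = (if h = h0 then Aq h0 (s0, a0) else 0)"
    if h: "h \<in> {1..H}" for h
  proof (cases "h < h0")
    case True then show ?thesis using dirv_below[of h h0 s0 a0] by simp
  next
    case False
    show ?thesis
    proof (cases "h = h0")
      case True
      have D: "?\<delta> h0 = (\<lambda>x. if fst x = s0 then (if snd x = a0 then 1 else 0) - pol (d h0) (snd x) s0 else 0)"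
        using dirv_at[of h0 s0 a0] h0 by simp
      have per: "(\<Sum>a\<in>UNIV. ?\<delta> h0 (s, a) * Aq h0 (s, a)) = (if s = s0 then
          (\<Sum>a\<in>UNIV. ((if a = a0 then 1 else 0) - pol (d h0) a s0) * Aq h0 (s0, a)) else 0)" for s
        by (cases "s = s0") (simp_all add: D)
      have "(\<Sum>x\<in>UNIV. ?\<delta> h x * Aq h x)
          = (\<Sum>a\<in>UNIV. ((if a = a0 then 1 else 0) - pol (d h0) a s0) * Aq h0 (s0, a))"
        unfolding True sum_pair per by simp
      also have "\<dots> = (\<Sum>a\<in>UNIV. (if a = a0 then Aq h0 (s0, a) else 0) - pol (d h0) a s0 * Aq h0 (s0, a))"
        by (intro sum.cong) (auto simp: algebra_simps)
      also have "\<dots> = Aq h0 (s0, a0) - (\<Sum>a\<in>UNIV. pol (d h0) a s0 * Aq h0 (s0, a))"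
        by (simp add: sum_subtractf)
      also have "\<dots> = Aq h0 (s0, a0)" using A_avg[OF h0] by simp
      finally show ?thesis using True by simp
    next
      case False2: False
      then have hh: "h0 < h" using False by simp
      then obtain k where k: "h = Suc k" by (cases h) auto
      have "(\<Sum>x\<in>UNIV. ?\<delta> h x * Aq h x)
          = (\<Sum>s\<in>UNIV. FT f (?\<delta> k) s * (\<Sum>b\<in>UNIV. pol (d h) b s * Aq h (s, b)))"
        unfolding k dirv_above[OF hh[unfolded k]] by (simp add: sum_pair sum_distrib_left algebra_simps)
      also have "\<dots> = 0" using A_avg[OF h] by simp
      finally show ?thesis using False2 by simp
    qed
  qed
  have "0 = (\<Sum>h=1..H. \<Sum>x\<in>UNIV. ?\<delta> h x * Gr h (d h) x)"
    using stationary[OF H1 dirv_flow[OF h0]] by simp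
  also have "\<dots> = (\<Sum>h=1..H. \<Sum>x\<in>UNIV. ?\<delta> h x * Aq h x)" by (rule Gr_to_A[OF H1 dirv_flow[OF h0]])
  also have "\<dots> = (\<Sum>h=1..H. if h = h0 then Aq h0 (s0, a0) else 0)" using terms by (intro sum.cong) auto
  also have "\<dots> = Aq h0 (s0, a0)" using h0 by simp
  finally show ?thesis by simp
qed

end

lemma gap_nonneg:
  fixes p q :: "'x::finite \<Rightarrow> real"
  assumes p: "\<forall>x. 0 \<le> p x" and q: "\<forall>x. 0 \<le> q x" and sp: "(\<Sum>x\<in>UNIV. p x) = 1"
    and sq: "(\<Sum>x\<in>UNIV. q x) \<le> 1" and pq: "\<forall>x. 0 < p x \<longrightarrow> 0 < q x"
  shows "0 \<le> (\<Sum>x\<in>UNIV. p x * ln (p x / q x))"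
proof -
  have "(\<Sum>x\<in>UNIV. p x - q x) \<le> (\<Sum>x\<in>UNIV. p x * ln (p x / q x))"
    using p q pq by (intro sum_mono gibbs_term) auto
  moreover have "(\<Sum>x\<in>UNIV. p x - q x) = 1 - (\<Sum>x\<in>UNIV. q x)" using sp by (simp add: sum_subtractf)
  ultimately show ?thesis using sq by linarith
qed

lemma gap_zero_eq:
  fixes p q :: "'x::finite \<Rightarrow> real"
  assumes p: "\<forall>x. 0 < p x" and q: "\<forall>x. 0 < q x" and sp: "(\<Sum>x\<in>UNIV. p x) = 1"
    and sq: "(\<Sum>x\<in>UNIV. q x) = 1" and z: "(\<Sum>x\<in>UNIV. p x * ln (p x / q x)) \<le> 0"
  shows "q x = p x"
proof -
  define t where "t x = p x * ln (p x / q x) - (p x - q x)" for x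
  have "p x - q x \<le> p x * ln (p x / q x)" for x
    using p q by (intro gibbs_term) (auto simp: less_imp_le)
  then have tnn: "\<forall>x\<in>UNIV. 0 \<le> t x" unfolding t_def by (simp add: algebra_simps)
  have "(\<Sum>x\<in>UNIV. t x) = (\<Sum>x\<in>UNIV. p x * ln (p x / q x)) - (\<Sum>x\<in>UNIV. p x - q x)"
    unfolding t_def by (simp add: sum_subtractf)
  also have "(\<Sum>x\<in>UNIV. p x - q x) = 0" using sp sq by (simp add: sum_subtractf)
  finally have "(\<Sum>x\<in>UNIV. t x) \<le> 0" using z by simp
  moreover have "0 \<le> (\<Sum>x\<in>UNIV. t x)" using tnn by (simp add: sum_nonneg)
  ultimately have "(\<Sum>x\<in>UNIV. t x) = 0" by linarith
  then have "t x = 0" using sum_nonneg_eq_0_iff[of UNIV t] tnn by simp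
  then have "p x * ln (p x / q x) = p x - q x" unfolding t_def by simp
  then show ?thesis using gibbs_term_eq p q by blast
qed

context mdp begin

definition VQ where "VQ Q = Vfun \<beta> H dt Q"
definition gQ where "gQ Q h x = r h x + Fop f (VQ Q (h + 1)) x - Q h x"
definition ZQ where "ZQ Q h = (\<Sum>x\<in>UNIV. dt h x * exp (\<beta> * gQ Q h x))"
definition ppQ where "ppQ Q h x = dt h x * exp (\<beta> * gQ Q h x) / ZQ Q h"
definition WQ where "WQ Q h s = (\<Sum>a\<in>UNIV. pol (dt h) a s * exp (\<beta> * Q h (s, a)))"
definition qqQ where "qqQ Q dd h x = ET (dd h) (fst x) * (pol (dt h) (snd x) (fst x) * exp (\<beta> * Q h x) / WQ Q h (fst x))"
definition gap1 where "gap1 Q dd h = (\<Sum>x\<in>UNIV. dd h x * ln (dd h x / ppQ Q h x))"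
definition gap2 where "gap2 Q dd h = (\<Sum>x\<in>UNIV. dd h x * ln (dd h x / qqQ Q dd h x))"

lemma ZQ_pos: "h \<in> {1..H} \<Longrightarrow> 0 < ZQ Q h"
  unfolding ZQ_def using dt_pos by (intro sum_pos) auto

lemma WQ_pos: "h \<in> {1..H} \<Longrightarrow> 0 < WQ Q h s"
  unfolding WQ_def using poldt_pos by (intro sum_pos) auto

lemma ppQ_pos: assumes h: "h \<in> {1..H}" shows "0 < ppQ Q h x"
proof -
  have "0 < dt h x" using dt_pos h by blast
  then show ?thesis unfolding ppQ_def using ZQ_pos[OF h, of Q] by simp
qed

lemma ppQ_sum: "h \<in> {1..H} \<Longrightarrow> (\<Sum>x\<in>UNIV. ppQ Q h x) = 1"
  unfolding ppQ_def using ZQ_pos[of h Q] by (simp add: sum_divide_distrib[symmetric] ZQ_def)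

lemma VQ_eq: "h \<le> H \<Longrightarrow> VQ Q h s = ln (WQ Q h s) / \<beta>"
  unfolding VQ_def Vfun_def WQ_def by simp

lemma VQ_top: "VQ Q (Suc H) = (\<lambda>s. 0)"
  unfolding VQ_def Vfun_def by (simp add: fun_eq_iff)

lemma qqQ_sum: assumes h: "h \<in> {1..H}" and dd: "feasible f \<nu> H dd"
  shows "(\<Sum>x\<in>UNIV. qqQ Q dd h x) = 1"
proof -
  have "(\<Sum>x\<in>UNIV. qqQ Q dd h x) = (\<Sum>s\<in>UNIV. ET (dd h) s * ((\<Sum>a\<in>UNIV. pol (dt h) a s * exp (\<beta> * Q h (s, a))) / WQ Q h s))"
    unfolding qqQ_def by (simp add: sum_pair sum_distrib_left sum_divide_distrib)
  also have "\<dots> = (\<Sum>s\<in>UNIV. ET (dd h) s)"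
  proof -
    have "\<forall>s. WQ Q h s \<noteq> 0" using WQ_pos[OF h, of Q] by (metis less_irrefl)
    then show ?thesis unfolding WQ_def[symmetric] by simp
  qed
  also have "\<dots> = 1" using sum_ET flow_sum dd h unfolding feasible_iff by metis
  finally show ?thesis .
qed

lemma qqQ_nonneg: assumes h: "h \<in> {1..H}" and dd: "feasible f \<nu> H dd"
  shows "0 \<le> qqQ Q dd h x"
proof -
  have "\<forall>x. 0 \<le> dd h x" using dd h unfolding feasible_iff by blast
  then have "0 \<le> ET (dd h) (fst x)" by (rule ET_nonneg)
  then show ?thesis unfolding qqQ_def using poldt_pos[OF h] WQ_pos[OF h]
    by (intro mult_nonneg_nonneg divide_nonneg_nonneg) (auto simp: less_imp_le)
qed

lemma qqQ_pos: assumes h: "h \<in> {1..H}" and dd: "feasible f \<nu> H dd" and p: "0 < dd h x"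
  shows "0 < qqQ Q dd h x"
proof -
  have "\<forall>x. 0 \<le> dd h x" using dd h unfolding feasible_iff by blast
  then have "dd h x \<le> ET (dd h) (fst x)" using le_ET[of "dd h" "fst x" "snd x"] by simp
  then have "0 < ET (dd h) (fst x)" using p by simp
  then show ?thesis unfolding qqQ_def using poldt_pos[OF h] WQ_pos[OF h] by simp
qed

lemma gap1_eq: assumes h: "h \<in> {1..H}" and dd: "feasible f \<nu> H dd"
  shows "gap1 Q dd h = relent (dd h) (dt h) - \<beta> * (\<Sum>x\<in>UNIV. dd h x * gQ Q h x) + ln (ZQ Q h)"
proof -
  have nn: "\<forall>x. 0 \<le> dd h x" using dd h unfolding feasible_iff by blast
  have s1: "(\<Sum>x\<in>UNIV. dd h x) = 1" using dd h flow_sum unfolding feasible_iff by blast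
  have per: "dd h x * ln (dd h x / ppQ Q h x) = dd h x * ln (dd h x / dt h x) - \<beta> * (dd h x * gQ Q h x) + dd h x * ln (ZQ Q h)" for x
  proof (cases "dd h x = 0")
    case True then show ?thesis by simp
  next
    case False
    then have p: "0 < dd h x" using nn[rule_format, of x] by linarith
    have dtp: "0 < dt h x" using dt_pos h by blast
    have Zp: "0 < ZQ Q h" by (rule ZQ_pos[OF h])
    have "ln (ppQ Q h x) = ln (dt h x) + \<beta> * gQ Q h x - ln (ZQ Q h)"
      unfolding ppQ_def using dtp Zp by (simp add: ln_divide_pos ln_mult_pos)
    moreover have "ln (dd h x / ppQ Q h x) = ln (dd h x) - ln (ppQ Q h x)"
      using p ppQ_pos[OF h] by (simp add: ln_divide_pos)
    moreover have "ln (dd h x / dt h x) = ln (dd h x) - ln (dt h x)"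
      using p dtp by (simp add: ln_divide_pos)
    ultimately have "ln (dd h x / ppQ Q h x) = ln (dd h x / dt h x) - \<beta> * gQ Q h x + ln (ZQ Q h)" by linarith
    then have "dd h x * ln (dd h x / ppQ Q h x) = dd h x * (ln (dd h x / dt h x) - \<beta> * gQ Q h x + ln (ZQ Q h))" by simp
    then show ?thesis by (simp add: algebra_simps)
  qed
  show ?thesis unfolding gap1_def relent_def per
    by (simp add: sum.distrib sum_subtractf sum_distrib_left[symmetric] sum_distrib_right[symmetric] s1)
qed

lemma gap2_eq: assumes h: "h \<in> {1..H}" and dd: "feasible f \<nu> H dd"
  shows "gap2 Q dd h = condrelent (dd h) (dt h) - \<beta> * (\<Sum>x\<in>UNIV. dd h x * Q h x)
           + \<beta> * (\<Sum>x\<in>UNIV. dd h x * VQ Q h (fst x))"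
proof -
  have nn: "\<forall>x. 0 \<le> dd h x" using dd h unfolding feasible_iff by blast
  have per: "dd h x * ln (dd h x / qqQ Q dd h x) = dd h x * ln (pol (dd h) (snd x) (fst x) / pol (dt h) (snd x) (fst x))
      - \<beta> * (dd h x * Q h x) + \<beta> * (dd h x * VQ Q h (fst x))" for x
  proof (cases "dd h x = 0")
    case True then show ?thesis by simp
  next
    case False
    then have p: "0 < dd h x" using nn[rule_format, of x] by linarith
    have "dd h x \<le> ET (dd h) (fst x)" using le_ET[OF nn, of "fst x" "snd x"] by simp
    then have E: "0 < ET (dd h) (fst x)" using p by simp
    have pt: "0 < pol (dt h) (snd x) (fst x)" by (rule poldt_pos[OF h])
    have W: "0 < WQ Q h (fst x)" by (rule WQ_pos[OF h])
    have pd: "pol (dd h) (snd x) (fst x) = dd h x / ET (dd h) (fst x)" by (simp add: pol_eq)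
    have l1: "ln (dd h x / qqQ Q dd h x) = ln (dd h x) - (ln (ET (dd h) (fst x)) + (ln (pol (dt h) (snd x) (fst x)) + \<beta> * Q h x - ln (WQ Q h (fst x))))"
    proof -
      have ex: "0 < exp (\<beta> * Q h x)" by simp
      have a1: "ln (pol (dt h) (snd x) (fst x) * exp (\<beta> * Q h x) / WQ Q h (fst x))
          = ln (pol (dt h) (snd x) (fst x)) + \<beta> * Q h x - ln (WQ Q h (fst x))"
        using pt ex W by (simp add: ln_divide_pos ln_mult_pos)
      have "0 < pol (dt h) (snd x) (fst x) * exp (\<beta> * Q h x) / WQ Q h (fst x)" using pt ex W by simp
      then have a2: "ln (qqQ Q dd h x) = ln (ET (dd h) (fst x)) + ln (pol (dt h) (snd x) (fst x) * exp (\<beta> * Q h x) / WQ Q h (fst x))"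
        unfolding qqQ_def using E by (simp only: ln_mult_pos)
      have a3: "ln (dd h x / qqQ Q dd h x) = ln (dd h x) - ln (qqQ Q dd h x)"
        using p qqQ_pos[OF h dd p, of Q] by (simp add: ln_divide_pos)
      show ?thesis unfolding a3 a2 a1 by simp
    qed
    have l2: "ln (pol (dd h) (snd x) (fst x) / pol (dt h) (snd x) (fst x)) = ln (dd h x) - ln (ET (dd h) (fst x)) - ln (pol (dt h) (snd x) (fst x))"
    proof -
      have "0 < dd h x / ET (dd h) (fst x)" using p E by simp
      then have "ln (dd h x / ET (dd h) (fst x) / pol (dt h) (snd x) (fst x)) = ln (dd h x / ET (dd h) (fst x)) - ln (pol (dt h) (snd x) (fst x))"
        using pt by (simp only: ln_divide_pos)
      moreover have "ln (dd h x / ET (dd h) (fst x)) = ln (dd h x) - ln (ET (dd h) (fst x))"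
        using p E by (simp only: ln_divide_pos)
      ultimately show ?thesis unfolding pd by simp
    qed
    have l3: "\<beta> * VQ Q h (fst x) = ln (WQ Q h (fst x))" using VQ_eq[of h Q "fst x"] h beta_pos by simp
    show ?thesis unfolding l1 l2 using l3 by (simp add: algebra_simps)
  qed
  show ?thesis unfolding gap2_def condrelent_def per
    by (simp add: sum.distrib sum_subtractf sum_distrib_left[symmetric])
qed

lemma loss_identity:
  assumes H1: "1 \<le> H" and dd: "feasible f \<nu> H dd"
  shows "loss \<beta> H f \<nu> r dt Q = objective \<beta> H r dt dd + (\<Sum>h=1..H. gap1 Q dd h + gap2 Q dd h) / \<beta>"
proof -
  have fl: "flow dd \<nu>" using dd unfolding feasible_iff by blast
  have per: "ln (ZQ Q h) / \<beta> = (inner_sa (dd h) (r h) - relent (dd h) (dt h) / \<beta> - condrelent (dd h) (dt h) / \<beta>)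
      + (gap1 Q dd h + gap2 Q dd h) / \<beta>
      + ((\<Sum>x\<in>UNIV. dd h x * Fop f (VQ Q (h+1)) x) - (\<Sum>x\<in>UNIV. dd h x * VQ Q h (fst x)))" if h: "h \<in> {1..H}" for h
  proof -
    have g: "(\<Sum>x\<in>UNIV. dd h x * gQ Q h x) = inner_sa (dd h) (r h) + (\<Sum>x\<in>UNIV. dd h x * Fop f (VQ Q (h+1)) x)
        - (\<Sum>x\<in>UNIV. dd h x * Q h x)"
      unfolding gQ_def inner_sa_def by (simp add: algebra_simps sum.distrib sum_subtractf)
    have "ln (ZQ Q h) = gap1 Q dd h - relent (dd h) (dt h) + \<beta> * (\<Sum>x\<in>UNIV. dd h x * gQ Q h x)"
      using gap1_eq[OF h dd, of Q] by simp
    also have "\<dots> = gap1 Q dd h + gap2 Q dd h - relent (dd h) (dt h) - condrelent (dd h) (dt h)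
       + \<beta> * inner_sa (dd h) (r h) + \<beta> * ((\<Sum>x\<in>UNIV. dd h x * Fop f (VQ Q (h+1)) x) - (\<Sum>x\<in>UNIV. dd h x * VQ Q h (fst x)))"
      unfolding g using gap2_eq[OF h dd, of Q] by (simp add: algebra_simps)
    finally have "ln (ZQ Q h) = \<beta> * ((inner_sa (dd h) (r h) - relent (dd h) (dt h) / \<beta> - condrelent (dd h) (dt h) / \<beta>)
      + (gap1 Q dd h + gap2 Q dd h) / \<beta>
      + ((\<Sum>x\<in>UNIV. dd h x * Fop f (VQ Q (h+1)) x) - (\<Sum>x\<in>UNIV. dd h x * VQ Q h (fst x))))"
      using beta_pos by (simp add: algebra_simps add_divide_distrib diff_divide_distrib)
    then show ?thesis using beta_pos by simp
  qed
  have "loss \<beta> H f \<nu> r dt Q = (\<Sum>h=1..H. ln (ZQ Q h) / \<beta>) + (\<Sum>s\<in>UNIV. \<nu> s * VQ Q 1 s)"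
    unfolding loss_def ZQ_def gQ_def VQ_def by (simp add: sum_divide_distrib)
  also have "(\<Sum>h=1..H. ln (ZQ Q h) / \<beta>) = objective \<beta> H r dt dd + (\<Sum>h=1..H. (gap1 Q dd h + gap2 Q dd h) / \<beta>)
     + (\<Sum>h=1..H. (\<Sum>x\<in>UNIV. dd h x * Fop f (VQ Q (h+1)) x) - (\<Sum>x\<in>UNIV. dd h x * VQ Q h (fst x)))"
    unfolding objective_def using per by (simp add: sum.distrib)
  also have "(\<Sum>h=1..H. (\<Sum>x\<in>UNIV. dd h x * Fop f (VQ Q (h+1)) x) - (\<Sum>x\<in>UNIV. dd h x * VQ Q h (fst x)))
      = - (\<Sum>s\<in>UNIV. \<nu> s * VQ Q 1 s)" by (rule telescope[where z=dd and c=\<nu> and V="VQ Q", OF H1 fl VQ_top])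
  also have "(\<Sum>h=1..H. (gap1 Q dd h + gap2 Q dd h) / \<beta>) = (\<Sum>h=1..H. gap1 Q dd h + gap2 Q dd h) / \<beta>"
    by (simp add: sum_divide_distrib)
  finally show ?thesis by simp
qed

lemma gaps_nonneg: assumes h: "h \<in> {1..H}" and dd: "feasible f \<nu> H dd"
  shows "0 \<le> gap1 Q dd h" "0 \<le> gap2 Q dd h"
proof -
  have nn: "\<forall>x. 0 \<le> dd h x" using dd h unfolding feasible_iff by blast
  have s1: "(\<Sum>x\<in>UNIV. dd h x) = 1" using dd h flow_sum unfolding feasible_iff by blast
  show "0 \<le> gap1 Q dd h" unfolding gap1_def
    using nn s1 ppQ_pos[OF h] ppQ_sum[OF h] by (intro gap_nonneg) (auto simp: less_imp_le)
  show "0 \<le> gap2 Q dd h" unfolding gap2_def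
    using nn s1 qqQ_nonneg[OF h dd] qqQ_sum[OF h dd] qqQ_pos[OF h dd] by (intro gap_nonneg) auto
qed

end

context mdp_opt begin

definition Qs :: "nat \<Rightarrow> 's \<times> 'a \<Rightarrow> real" where
  "Qs h x = (ln (pol (d h) (snd x) (fst x)) - ln (pol (dt h) (snd x) (fst x))) / \<beta> + lam h (fst x)"

lemma pold_pos: "h \<in> {1..H} \<Longrightarrow> 0 < pol (d h) a s"
  using d_pos ETd_pos by (simp add: pol_eq)

lemma pt_exp_Qs: assumes h: "h \<in> {1..H}"
  shows "pol (dt h) a s * exp (\<beta> * Qs h (s, a)) = pol (d h) a s * exp (\<beta> * lam h s)"
proof -
  have "\<beta> * Qs h (s, a) = ln (pol (d h) a s) - ln (pol (dt h) a s) + \<beta> * lam h s"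
    unfolding Qs_def using beta_pos by (simp add: distrib_left)
  then have "exp (\<beta> * Qs h (s, a)) = pol (d h) a s / pol (dt h) a s * exp (\<beta> * lam h s)"
    using pold_pos[OF h] poldt_pos[OF h] by (simp add: exp_add exp_diff)
  then show ?thesis using poldt_pos[OF h, of a s] by simp
qed

lemma WQ_Qs: assumes h: "h \<in> {1..H}" shows "WQ Qs h s = exp (\<beta> * lam h s)"
proof -
  have "WQ Qs h s = (\<Sum>a\<in>UNIV. pol (d h) a s) * exp (\<beta> * lam h s)"
    unfolding WQ_def pt_exp_Qs[OF h] by (simp add: sum_distrib_right)
  then show ?thesis using pol_sum[OF h] by simp
qed

lemma VQ_Qs: assumes h: "1 \<le> h" "h \<le> Suc H" shows "VQ Qs h = lam h"
proof (cases "h = Suc H")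
  case True then show ?thesis using VQ_top lam_top by simp
next
  case False
  then have hh: "h \<in> {1..H}" using h by auto
  show ?thesis
  proof
    fix s show "VQ Qs h s = lam h s"
      using VQ_eq[of h Qs s] WQ_Qs[OF hh, of s] hh beta_pos by simp
  qed
qed

lemma ln_pold: assumes h: "h \<in> {1..H}"
  shows "ln (pol (d h) (snd x) (fst x)) = ln (d h x) - ln (ET (d h) (fst x))"
  using d_pos[OF h, of x] ETd_pos[OF h, of "fst x"] by (simp add: pol_eq ln_divide_pos)

lemma pp_Qs: assumes h: "h \<in> {1..H}" shows "ppQ Qs h x = d h x"
proof -
  have A0: "Gr h (d h) y + Fop f (lam (Suc h)) y = lam h (fst y)" for y
    using A_zero[OF h, of "fst y" "snd y"] unfolding Aq_def by simp
  have V: "VQ Qs (h + 1) = lam (Suc h)" using VQ_Qs[of "h+1"] h by simp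
  have bg: "\<beta> * gQ Qs h y = ln (d h y) - ln (dt h y) + 1" for y
  proof -
    have c1: "\<beta> * gQ Qs h y = \<beta> * r h y + \<beta> * Fop f (lam (Suc h)) y - \<beta> * Qs h y"
      unfolding gQ_def V by (simp add: algebra_simps)
    have c2: "\<beta> * Qs h y = ln (pol (d h) (snd y) (fst y)) - ln (pol (dt h) (snd y) (fst y))
         + \<beta> * Gr h (d h) y + \<beta> * Fop f (lam (Suc h)) y"
      unfolding Qs_def A0[symmetric] using beta_pos by (simp add: distrib_left)
    have c3: "\<beta> * Gr h (d h) y = \<beta> * r h y + ln (dt h y) + ln (pol (dt h) (snd y) (fst y))
        - 2 * (ln (d h y) + 1) + (ln (ET (d h) (fst y)) + 1)"
      unfolding Gr_def ell_def using beta_pos by (simp add: algebra_simps add_divide_distrib)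
    show ?thesis unfolding c1 c2 c3 ln_pold[OF h, of y] by (simp add: algebra_simps)
  qed
  have e: "dt h y * exp (\<beta> * gQ Qs h y) = d h y * exp 1" for y
  proof -
    have dtp: "0 < dt h y" using dt_pos h by blast
    have "exp (\<beta> * gQ Qs h y) = d h y / dt h y * exp 1"
      unfolding bg using d_pos[OF h, of y] dtp by (simp add: exp_add exp_diff)
    then show ?thesis using dtp by simp
  qed
  have Z: "ZQ Qs h = exp 1"
    unfolding ZQ_def e using flow_sum[OF d_flow h] by (simp add: sum_distrib_right[symmetric])
  show ?thesis unfolding ppQ_def e Z by simp
qed

lemma qq_Qs: assumes h: "h \<in> {1..H}" shows "qqQ Qs d h x = d h x"
proof -
  have "qqQ Qs d h x = ET (d h) (fst x) * pol (d h) (snd x) (fst x)"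
    unfolding qqQ_def WQ_Qs[OF h] pt_exp_Qs[OF h, of "snd x" "fst x", simplified] by simp
  also have "\<dots> = d h x" using ETd_pos[OF h, of "fst x"] by (simp add: pol_eq)
  finally show ?thesis .
qed

lemma loss_Qs: assumes H1: "1 \<le> H" shows "loss \<beta> H f \<nu> r dt Qs = objective \<beta> H r dt d"
proof -
  have "gap1 Qs d h + gap2 Qs d h = 0" if h: "h \<in> {1..H}" for h
  proof -
    have nz: "d h x \<noteq> 0" for x using d_pos[OF h, of x] by simp
    show ?thesis using nz unfolding gap1_def gap2_def pp_Qs[OF h] qq_Qs[OF h] by simp
  qed
  then show ?thesis using loss_identity[OF H1 d_feas, of Qs] by simp
qed

lemma main:
  assumes H1: "1 \<le> H"
  shows "(\<exists>Q. \<forall>Q'. loss \<beta> H f \<nu> r dt Q \<le> loss \<beta> H f \<nu> r dt Q') \<and>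
         (\<forall>Q. (\<forall>Q'. loss \<beta> H f \<nu> r dt Q \<le> loss \<beta> H f \<nu> r dt Q') \<longrightarrow>
            (\<forall>h\<in>{1..H}. \<forall>s. \<exists>c>0. \<forall>a.
               pol (d h) a s = c * (pol (dt h) a s * exp (\<beta> * Q h (s, a)))))"
proof -
  have gnn: "0 \<le> gap1 Q d h + gap2 Q d h" if "h \<in> {1..H}" for Q h
    using gaps_nonneg[OF that d_feas, of Q] by linarith
  have gapsum_nn: "0 \<le> (\<Sum>h=1..H. gap1 Q d h + gap2 Q d h)" for Q
    by (rule sum_nonneg) (rule gnn)
  have lower: "objective \<beta> H r dt d \<le> loss \<beta> H f \<nu> r dt Q" for Q
    using loss_identity[OF H1 d_feas, of Q] gapsum_nn[of Q] beta_pos by simp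
  have part1: "\<forall>Q'. loss \<beta> H f \<nu> r dt Qs \<le> loss \<beta> H f \<nu> r dt Q'"
    using lower loss_Qs[OF H1] by simp
  have part2: "\<exists>c>0. \<forall>a. pol (d h) a s = c * (pol (dt h) a s * exp (\<beta> * Q h (s, a)))"
    if minQ: "\<forall>Q'. loss \<beta> H f \<nu> r dt Q \<le> loss \<beta> H f \<nu> r dt Q'" and h: "h \<in> {1..H}" for Q h s
  proof -
    have "loss \<beta> H f \<nu> r dt Q \<le> objective \<beta> H r dt d" using minQ loss_Qs[OF H1] by metis
    then have "(\<Sum>h=1..H. gap1 Q d h + gap2 Q d h) / \<beta> \<le> 0"
      using loss_identity[OF H1 d_feas, of Q] by simp
    then have S: "(\<Sum>h=1..H. gap1 Q d h + gap2 Q d h) = 0"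
      using gapsum_nn[of Q] beta_pos by (simp add: divide_le_0_iff)
    have "gap1 Q d h + gap2 Q d h = 0"
      using sum_nonneg_eq_0_iff[of "{1..H}" "\<lambda>h. gap1 Q d h + gap2 Q d h", OF finite_atLeastAtMost gnn[of _ Q]] S h
      by blast
    then have g2: "gap2 Q d h \<le> 0" using gaps_nonneg[OF h d_feas, of Q] by linarith
    have qq: "qqQ Q d h x = d h x" for x
    proof (rule gap_zero_eq[where p="d h" and q="qqQ Q d h"])
      show "\<forall>x. 0 < d h x" using d_pos[OF h] by blast
      show "\<forall>x. 0 < qqQ Q d h x" using qqQ_pos[OF h d_feas] d_pos[OF h] by blast
      show "(\<Sum>x\<in>UNIV. d h x) = 1" by (rule flow_sum[OF d_flow h])
      show "(\<Sum>x\<in>UNIV. qqQ Q d h x) = 1" by (rule qqQ_sum[OF h d_feas])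
      show "(\<Sum>x\<in>UNIV. d h x * ln (d h x / qqQ Q d h x)) \<le> 0" using g2 unfolding gap2_def .
    qed
    show ?thesis
    proof (intro exI conjI allI)
      show "0 < 1 / WQ Q h s" using WQ_pos[OF h] by simp
      fix a
      have "pol (d h) a s = qqQ Q d h (s, a) / ET (d h) s" using qq[of "(s, a)"] by (simp add: pol_eq)
      also have "\<dots> = 1 / WQ Q h s * (pol (dt h) a s * exp (\<beta> * Q h (s, a)))"
        unfolding qqQ_def using ETd_pos[OF h, of s] by simp
      finally show "pol (d h) a s = 1 / WQ Q h s * (pol (dt h) a s * exp (\<beta> * Q h (s, a)))" .
    qed
  qed
  show ?thesis using part1 part2 by blast
qed

end

theorem theorem6:
  fixes f :: "'s::finite \<Rightarrow> 'a::finite \<Rightarrow> 's \<Rightarrow> real"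
    and \<nu> :: "'s \<Rightarrow> real" and H :: nat and \<beta> :: real
    and r dt dt1 :: "nat \<Rightarrow> 's \<times> 'a \<Rightarrow> real"
  assumes f_nonneg: "\<forall>s a s'. 0 \<le> f s a s'"
    and f_sum: "\<forall>s a. (\<Sum>s'\<in>UNIV. f s a s') = 1"
    and nu_nonneg: "\<forall>s. 0 \<le> \<nu> s" and nu_sum: "(\<Sum>s\<in>UNIV. \<nu> s) = 1"
    and beta_pos: "\<beta> > 0"
    and dt_feas: "feasible f \<nu> H dt"
    and dt_pos: "\<forall>h\<in>{1..H}. \<forall>x. 0 < dt h x"
    and dt1_feas: "feasible f \<nu> H dt1"
    and dt1_max: "\<forall>d. feasible f \<nu> H d \<longrightarrow> objective \<beta> H r dt d \<le> objective \<beta> H r dt dt1"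
  shows "(\<exists>Q. \<forall>Q'. loss \<beta> H f \<nu> r dt Q \<le> loss \<beta> H f \<nu> r dt Q') \<and>
         (\<forall>Q. (\<forall>Q'. loss \<beta> H f \<nu> r dt Q \<le> loss \<beta> H f \<nu> r dt Q') \<longrightarrow>
            (\<forall>h\<in>{1..H}. \<forall>s. \<exists>c>0. \<forall>a.
               pol (dt1 h) a s = c * (pol (dt h) a s * exp (\<beta> * Q h (s, a)))))"
proof (cases "H = 0")
  case True
  then have "loss \<beta> H f \<nu> r dt Q = 0" for Q by (simp add: loss_def Vfun_def)
  then show ?thesis using True by simp
next
  case False
  interpret mdp_opt f \<nu> H \<beta> r dt dt1
    by (intro mdp_opt.intro mdp.intro mdp_opt_axioms.intro) (rule assms)+
  show ?thesis using main False by simp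
qed

end
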